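(* Let $h,g_1,g_2>0$ and $f\in(0,1)$. For $\Delta>0$ define (logarithms base $2$) \begin{align*} I_{hd,1}(\Delta)&=f\log\Big(1+\frac{h^2}{1+\Delta}+g_2^2\Big)+(1-f)\log(1+g_2^2),\\ I_{hd,2}(\Delta)&=(1-f)\log(1+g_1^2+g_2^2)+f\Big\{\log(1+g_2^2)-\log\frac{1+\Delta}{\Delta}\Big\}. \end{align*} Then there is a unique $\Delta>0$ with $I_{hd,1}(\Delta)=I_{hd,2}(\Delta)$, and this $\Delta=\Delta^*(f)$ maximizes $[\min\{I_{hd,1}(\Delta),I_{hd,2}(\Delta)\}]^+$ over $\Delta>0$, where $[x]^+=\max\{x,0\}$.
   Context: $[\min\{I_{hd,1},I_{hd,2}\}]^+$ is the quantize-map-and-forward rate of the half-duplex Gaussian single-relay channel in which the relay listens for a fraction $f$ of the block and transmits for the remaining fraction $1-f$, using a Gaussian vector quantizer of distortion $\Delta$; $h,g_1,g_2$ are the source-relay, relay-destination and source-destination channel magnitudes, all known to the relay. *)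

theory Defs
  imports Complex_Main
begin

definition I_hd1 :: "real \<Rightarrow> real \<Rightarrow> real \<Rightarrow> real \<Rightarrow> real \<Rightarrow> real" where
  "I_hd1 h g1 g2 f \<Delta> =
     f * log 2 (1 + h^2 / (1 + \<Delta>) + g2^2) + (1 - f) * log 2 (1 + g2^2)"

definition I_hd2 :: "real \<Rightarrow> real \<Rightarrow> real \<Rightarrow> real \<Rightarrow> real \<Rightarrow> real" where
  "I_hd2 h g1 g2 f \<Delta> =
     (1 - f) * log 2 (1 + g1^2 + g2^2) + f * (log 2 (1 + g2^2) - log 2 ((1 + \<Delta>) / \<Delta>))"

definition pos_part :: "real \<Rightarrow> real" where
  "pos_part x = max x 0"

definition qmf_rate :: "real \<Rightarrow> real \<Rightarrow> real \<Rightarrow> real \<Rightarrow> real \<Rightarrow> real" where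
  "qmf_rate h g1 g2 f \<Delta> = pos_part (min (I_hd1 h g1 g2 f \<Delta>) (I_hd2 h g1 g2 f \<Delta>))"

end

theory Submission
  imports Defs
begin

lemma I1_mono:
  fixes h g1 g2 f x y :: real
  assumes "h > 0" "0 < f" "0 < x" "x < y"
  shows "I_hd1 h g1 g2 f y < I_hd1 h g1 g2 f x"
proof -
  have "h^2/(1+y) < h^2/(1+x)" using assms by (intro divide_strict_left_mono) auto
  moreover have "0 < 1 + h^2/(1+y) + g2^2" using assms by (simp add: add_pos_nonneg)
  ultimately have "log 2 (1 + h^2/(1+y) + g2^2) < log 2 (1 + h^2/(1+x) + g2^2)"
    by (subst log_less_cancel_iff) auto
  thus ?thesis using assms unfolding I_hd1_def by simp
qed

lemma I2_mono:
  fixes h g1 g2 f x y :: real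
  assumes "0 < f" "0 < x" "x < y"
  shows "I_hd2 h g1 g2 f x < I_hd2 h g1 g2 f y"
proof -
  have "(1+y)/y < (1+x)/x" using assms by (simp add: field_simps)
  moreover have "0 < (1+y)/y" using assms by simp
  ultimately have "log 2 ((1+y)/y) < log 2 ((1+x)/x)"
    by (subst log_less_cancel_iff) auto
  thus ?thesis using assms unfolding I_hd2_def by simp
qed

lemma D_lim:
  fixes h g1 g2 f :: real
  shows "((\<lambda>x. I_hd1 h g1 g2 f x - I_hd2 h g1 g2 f x) \<longlongrightarrow>
     (f * log 2 (1 + 0 + g2^2) + (1 - f) * log 2 (1 + g2^2)) -
     ((1 - f) * log 2 (1 + g1^2 + g2^2) + f * (log 2 (1 + g2^2) - log 2 1))) at_top"
proof -
  have a: "((\<lambda>x::real. h^2/(1+x)) \<longlongrightarrow> 0) at_top"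
    by (intro tendsto_divide_0[OF tendsto_const] filterlim_at_top_imp_at_infinity filterlim_tendsto_add_at_top[OF tendsto_const filterlim_ident])
  have b: "((\<lambda>x::real. (1+x)/x) \<longlongrightarrow> 1) at_top"
  proof -
    have "((\<lambda>x::real. 1/x + 1) \<longlongrightarrow> 0 + 1) at_top"
      by (intro tendsto_intros tendsto_divide_0[OF tendsto_const] filterlim_at_top_imp_at_infinity filterlim_ident)
    moreover have "eventually (\<lambda>x::real. 1/x + 1 = (1+x)/x) at_top"
      using eventually_gt_at_top[of 0] by eventually_elim (simp add: field_simps)
    ultimately show ?thesis by (simp add: tendsto_cong)
  qed
  have pos: "0 < 1 + 0 + g2^2" by (simp add: add_pos_nonneg)
  show ?thesis unfolding I_hd1_def I_hd2_def
    by (intro tendsto_intros a b) (use pos in auto)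
qed

theorem mainTheorem12:
  fixes h g1 g2 f :: real
  assumes "h > 0" and "g1 > 0" and "g2 > 0" and "0 < f" and "f < 1"
  shows "(\<exists>!\<Delta>. \<Delta> > 0 \<and> I_hd1 h g1 g2 f \<Delta> = I_hd2 h g1 g2 f \<Delta>) \<and>
         (\<forall>\<Delta>. \<Delta> > 0 \<and> I_hd1 h g1 g2 f \<Delta> = I_hd2 h g1 g2 f \<Delta> \<longrightarrow>
           (\<forall>\<Delta>'. \<Delta>' > 0 \<longrightarrow> qmf_rate h g1 g2 f \<Delta>' \<le> qmf_rate h g1 g2 f \<Delta>))"
proof -
  define D where "D x = I_hd1 h g1 g2 f x - I_hd2 h g1 g2 f x" for x
  define L where "L = log 2 (1 + g2^2)"
  define c where "c = (1-f) * (log 2 (1 + g1^2 + g2^2) - L)"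
  have g2p: "0 < 1 + g2^2" by (simp add: add_pos_nonneg)
  have "log 2 (1 + g2^2) < log 2 (1 + g1^2 + g2^2)"
    using g2p assms by (subst log_less_cancel_iff) (auto simp: add_pos_nonneg)
  hence cpos: "c > 0" unfolding c_def L_def using assms by simp
  have Dform: "D x = f * (log 2 (1 + h^2/(1+x) + g2^2) - L + log 2 ((1+x)/x)) - c" for x
    unfolding D_def I_hd1_def I_hd2_def c_def L_def by (simp add: algebra_simps)
  define q where "q = 2 powr (c/f)"
  have q1: "q > 1" unfolding q_def using cpos assms by simp
  define x0 where "x0 = 1/(q - 1)"
  have x0p: "x0 > 0" using q1 unfolding x0_def by simp
  have "(1+x0)/x0 = q" unfolding x0_def using q1 by (simp add: field_simps)
  hence lq: "log 2 ((1+x0)/x0) = c/f" unfolding q_def by simp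
  have "log 2 (1 + g2^2) < log 2 (1 + h^2/(1+x0) + g2^2)"
    using g2p assms x0p by (subst log_less_cancel_iff) (auto simp: add_pos_nonneg)
  hence Dx0: "D x0 > 0" unfolding Dform lq L_def using assms by (simp add: algebra_simps)
  have lim: "(D \<longlongrightarrow> -c) at_top"
    using D_lim[of h g1 g2 f] unfolding D_def c_def L_def by (simp add: algebra_simps)
  have "eventually (\<lambda>x. D x < 0) at_top"
    using order_tendstoD(2)[OF lim] cpos by simp
  moreover have "eventually (\<lambda>x. x > x0) at_top" by (rule eventually_gt_at_top)
  ultimately have "eventually (\<lambda>x. D x < 0 \<and> x > x0) at_top" by eventually_elim auto
  then obtain N where "\<forall>n\<ge>N. D n < 0 \<and> n > x0" unfolding eventually_at_top_linorder by blast
  then obtain x1 where x1: "D x1 < 0" "x1 > x0" by blast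
  have cont: "continuous_on {x0..x1} D"
  proof -
    have P: "0 < x \<and> 0 < 1 + h^2/(1+x) + g2^2" if "x \<in> {x0..x1}" for x
    proof -
      have xp: "x > 0" using x0p that by simp
      have "0 < h^2/(1+x)" using xp assms by simp
      thus ?thesis using g2p xp by linarith
    qed
    show ?thesis
      unfolding D_def I_hd1_def I_hd2_def by (intro continuous_intros) (auto dest!: P simp: add_pos_nonneg)
  qed
  obtain z where z: "x0 \<le> z" "z \<le> x1" "D z = 0"
    using IVT2'[of D x1 0 x0, OF _ _ _ cont] x1 Dx0 by auto
  have zp: "z > 0" using z x0p by simp
  have Dmono: "D y < D x" if "0 < x" "x < y" for x y
    using I1_mono[of h f x y g1 g2] I2_mono[of f x y h g1 g2] that assms unfolding D_def by simp
  have ex: "\<exists>!\<Delta>. \<Delta> > 0 \<and> I_hd1 h g1 g2 f \<Delta> = I_hd2 h g1 g2 f \<Delta>"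
  proof (rule ex1I[of _ z])
    show "z > 0 \<and> I_hd1 h g1 g2 f z = I_hd2 h g1 g2 f z" using zp z unfolding D_def by simp
  next
    fix y assume y: "y > 0 \<and> I_hd1 h g1 g2 f y = I_hd2 h g1 g2 f y"
    hence "D y = 0" unfolding D_def by simp
    with z zp y Dmono show "y = z"
      by (metis linorder_neqE_linordered_idom order_less_irrefl)
  qed
  have opt: "qmf_rate h g1 g2 f \<Delta>' \<le> qmf_rate h g1 g2 f \<Delta>"
    if d: "\<Delta> > 0" "I_hd1 h g1 g2 f \<Delta> = I_hd2 h g1 g2 f \<Delta>" and d': "\<Delta>' > 0" for \<Delta> \<Delta>'
  proof -
    have "min (I_hd1 h g1 g2 f \<Delta>') (I_hd2 h g1 g2 f \<Delta>') \<le> min (I_hd1 h g1 g2 f \<Delta>) (I_hd2 h g1 g2 f \<Delta>)"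
    proof (cases "\<Delta>' \<le> \<Delta>")
      case True
      hence "I_hd2 h g1 g2 f \<Delta>' \<le> I_hd2 h g1 g2 f \<Delta>"
        using I2_mono[of f \<Delta>' \<Delta> h g1 g2] d' assms by (cases "\<Delta>' = \<Delta>") auto
      thus ?thesis using d by simp
    next
      case False
      hence "I_hd1 h g1 g2 f \<Delta>' \<le> I_hd1 h g1 g2 f \<Delta>"
        using I1_mono[of h f \<Delta> \<Delta>' g1 g2] d assms by auto
      thus ?thesis using d by simp
    qed
    thus ?thesis unfolding qmf_rate_def pos_part_def by (rule max.mono) simp
  qed
  show ?thesis using ex opt by blast
qed

end
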